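(* Let $\boldsymbol{\mathcal{D}} = \begin{pmatrix}\boldsymbol{W}_p\\ \boldsymbol{U}_f \\ \boldsymbol{Y}_f\end{pmatrix}$ be a data matrix with full row rank and LQ decomposition as described in the context. For any $\boldsymbol{a}\in\mathbb{R}^\ell$, let $(\boldsymbol{\xi};\mathbf{u}_f;\mathbf{y}_f) := \boldsymbol{\mathcal{D}}\boldsymbol{a}$ and $\boldsymbol{\gamma}_i:=\boldsymbol{Q}_i\boldsymbol{a}$. Then \begin{align*} \|\boldsymbol{\gamma}_1\|_2^2 &= \|\boldsymbol{\xi}\|_{\left(\boldsymbol{W}_p\boldsymbol{W}_p^\top\right)^{-1}}^2,\\ \|\boldsymbol{\gamma}_2\|_2^2 &= \|\mathbf{u}_f-\boldsymbol{U}_f \boldsymbol{W}_p^+\boldsymbol{\xi}\|_{\boldsymbol{\mathcal{R}}_\text{reg}}^2,\\ \|\boldsymbol{\gamma}_3\|_2^2 &= \|\mathbf{y}_f-\hat{\mathbf{y}}_\text{SPC}(\boldsymbol{\xi}, \mathbf{u}_f)\|_{\boldsymbol{\mathcal{Q}}_\text{reg}}^2, \end{align*} where $\boldsymbol{\mathcal{R}}_\text{reg} :=\left(\boldsymbol{U}_f\left(\boldsymbol{I}-\boldsymbol{W}_p^+\boldsymbol{W}_p\right)\boldsymbol{U}_f^\top\right)^{-1}$, $\boldsymbol{\mathcal{Q}}_\text{reg} :=\left(\boldsymbol{Y}_f (\boldsymbol{I}-\boldsymbol{Z}^+\boldsymbol{Z}) \boldsymbol{Y}_f^\top\right)^{-1}$,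 $\boldsymbol{Z}:=\begin{pmatrix}\boldsymbol{W}_p\\ \boldsymbol{U}_f\end{pmatrix}$ and $\hat{\mathbf{y}}_\text{SPC}(\boldsymbol{\xi},\mathbf{u}_f) := \boldsymbol{Y}_f\boldsymbol{Z}^+\begin{pmatrix}\boldsymbol{\xi}\\ \mathbf{u}_f\end{pmatrix}$. Moreover, $\boldsymbol{\gamma}_4$ does not affect $(\boldsymbol{\xi},\mathbf{u}_f,\mathbf{y}_f)$.
   Context: $\boldsymbol{M}^+$ denotes the Moore–Penrose pseudoinverse and $\|\boldsymbol{x}\|_{\boldsymbol{M}}^2 := \boldsymbol{x}^\top\boldsymbol{M}\boldsymbol{x}$. Data: $m$ inputs, $p$ outputs, past horizon $N_p$, future horizon $N_f$, $L=N_p+N_f$, and $\ell$ data trajectories. The data matrix $\boldsymbol{\mathcal{D}}\in\mathbb{R}^{L(m+p)\times\ell}$ has blocks $\boldsymbol{W}_p\in\mathbb{R}^{N_p(m+p)\times\ell}$, $\boldsymbol{U}_f\in\mathbb{R}^{mN_f\times \ell}$, $\boldsymbol{Y}_f\in\mathbb{R}^{pN_f\times\ell}$ and is assumed to have full row rank. Its LQ decomposition is $\boldsymbol{\mathcal{D}} = \begin{pmatrix} \boldsymbol{L}_{11} & \boldsymbol{0} & \boldsymbol{0} & \boldsymbol{0} \\ \boldsymbol{L}_{21} & \boldsymbol{L}_{22} & \boldsymbol{0} & \boldsymbol{0} \\ \boldsymbol{L}_{31} & \boldsymbol{L}_{32} & \boldsymbol{L}_{33} & \boldsymbol{0} \end{pmatrix}\begin{pmatrix}\boldsymbol{Q}_1\\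 \boldsymbol{Q}_2\\ \boldsymbol{Q}_3\\ \boldsymbol{Q}_4\end{pmatrix}$, with non-singular square diagonal blocks $\boldsymbol{L}_{11},\boldsymbol{L}_{22},\boldsymbol{L}_{33}$ (of sizes matching $\boldsymbol{W}_p,\boldsymbol{U}_f,\boldsymbol{Y}_f$) and $\boldsymbol{Q}=\begin{pmatrix}\boldsymbol{Q}_1^\top & \boldsymbol{Q}_2^\top&\boldsymbol{Q}_3^\top&\boldsymbol{Q}_4^\top\end{pmatrix}^\top\in\mathbb{R}^{\ell\times\ell}$ orthogonal (so $\boldsymbol{Q}_i\boldsymbol{Q}_i^\top=\boldsymbol{I}$ and $\boldsymbol{Q}_i\boldsymbol{Q}_j^\top=\boldsymbol{0}$ for $i\ne j$). *)

theory Defs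
  imports "HOL-Analysis.Analysis"
begin

definition vstack :: "real^'n^'a \<Rightarrow> real^'n^'b \<Rightarrow> real^'n^('a + 'b)" where
  "vstack A B = (\<chi> i. case i of Inl j \<Rightarrow> A $ j | Inr j \<Rightarrow> B $ j)"

definition vjoin :: "real^'a \<Rightarrow> real^'b \<Rightarrow> real^('a + 'b)" where
  "vjoin x y = (\<chi> i. case i of Inl j \<Rightarrow> x $ j | Inr j \<Rightarrow> y $ j)"

text \<open>Moore-Penrose pseudoinverse, defined by the four Penrose conditions
  (it exists and is unique).\<close>
definition is_pinv :: "real^'n^'m \<Rightarrow> real^'m^'n \<Rightarrow> bool" where
  "is_pinv A X \<longleftrightarrow> A ** X ** A = A \<and> X ** A ** X = X \<and>
     transpose (A ** X) = A ** X \<and> transpose (X ** A) = X ** A"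

definition pinv :: "real^'n^'m \<Rightarrow> real^'m^'n" where
  "pinv A = (SOME X. is_pinv A X)"

definition wnorm2 :: "real^'n \<Rightarrow> real^'n^'n \<Rightarrow> real" where
  "wnorm2 x M = x \<bullet> (M *v x)"

end

theory Submission
  imports Defs
begin

lemma inv_ok:
  fixes A :: "real^'n^'n"
  assumes "invertible A"
  shows "A ** matrix_inv A = mat 1" "matrix_inv A ** A = mat 1"
proof -
  have "\<exists>A'. A ** A' = mat 1 \<and> A' ** A = mat 1" using assms unfolding invertible_def by blast
  then have "A ** matrix_inv A = mat 1 \<and> matrix_inv A ** A = mat 1"
    unfolding matrix_inv_def by (rule someI_ex)
  then show "A ** matrix_inv A = mat 1" "matrix_inv A ** A = mat 1" by auto
qed

lemma inv_unique:
  fixes A :: "real^'n^'n"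
  assumes "A ** B = mat 1" "B ** A = mat 1"
  shows "matrix_inv A = B"
proof -
  have i: "invertible A" using assms invertible_def by blast
  have "matrix_inv A = matrix_inv A ** (A ** B)" using assms by simp
  also have "\<dots> = (matrix_inv A ** A) ** B" by (simp add: matrix_mul_assoc)
  also have "\<dots> = B" using inv_ok[OF i] by simp
  finally show ?thesis .
qed

lemma mm_radd: "((A::real^'n^'m) + B) ** (C::real^'p^'n) = A ** C + B ** C"
  by (simp add: vec_eq_iff matrix_matrix_mult_def sum.distrib algebra_simps)
lemma mm_ldiff: "(A::real^'n^'m) ** ((B::real^'p^'n) - C) = A ** B - A ** C"
  by (simp add: vec_eq_iff matrix_matrix_mult_def sum_subtractf algebra_simps)
lemma mm_rdiff: "((A::real^'n^'m) - B) ** (C::real^'p^'n) = A ** C - B ** C"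
  by (simp add: vec_eq_iff matrix_matrix_mult_def sum_subtractf algebra_simps)
lemma transpose_add: "transpose ((A::real^'n^'m) + B) = transpose A + transpose B"
  by (simp add: vec_eq_iff transpose_def)
lemma transpose_diff: "transpose ((A::real^'n^'m) - B) = transpose A - transpose B"
  by (simp add: vec_eq_iff transpose_def)
lemma transpose_zero: "transpose (0::real^'n^'m) = 0"
  by (simp add: vec_eq_iff transpose_def)

lemma pinv_proj_unique:
  fixes Z :: "real^'n^'m"
  assumes "Z ** X ** Z = Z" "transpose (X ** Z) = X ** Z"
      "Z ** Y ** Z = Z" "transpose (Y ** Z) = Y ** Z"
  shows "X ** Z = Y ** Z"
proof -
  have g: "transpose (A ** Z) = A ** Z \<Longrightarrow> Z ** B ** Z = Z \<Longrightarrow> transpose (B ** Z) = B ** Z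
     \<Longrightarrow> A ** Z = B ** Z ** (A ** Z)" for A B :: "real^'m^'n"
  proof -
    assume a1: "transpose (A ** Z) = A ** Z" and a2: "Z ** B ** Z = Z" and a3: "transpose (B ** Z) = B ** Z"
    have tz: "transpose Z = B ** Z ** transpose Z"
      by (metis a2 a3 matrix_mul_assoc matrix_transpose_mul)
    have "A ** Z = transpose Z ** transpose A" by (metis a1 matrix_transpose_mul)
    also have "\<dots> = B ** Z ** (transpose Z ** transpose A)" by (metis tz matrix_mul_assoc)
    also have "\<dots> = B ** Z ** (A ** Z)" by (metis a1 matrix_transpose_mul)
    finally show ?thesis .
  qed
  have h1: "X ** Z = Y ** Z ** (X ** Z)" using g assms by blast
  have h2: "Y ** Z = X ** Z ** (Y ** Z)" using g assms by blast
  have "X ** Z = transpose (X ** Z)" using assms by simp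
  also have "\<dots> = transpose (X ** Z) ** transpose (Y ** Z)" by (metis h1 matrix_transpose_mul)
  also have "\<dots> = X ** Z ** (Y ** Z)" using assms by simp
  also have "\<dots> = Y ** Z" using h2 by simp
  finally show ?thesis .
qed

lemma pinv_right:
  fixes A :: "real^'n^'m"
  assumes "A ** X = mat 1" "transpose (X ** A) = X ** A"
  shows "is_pinv A X"
  unfolding is_pinv_def using assms
  by (metis matrix_mul_assoc matrix_mul_lid matrix_mul_rid transpose_mat)

lemma pinv_proj:
  fixes Z :: "real^'n^'m"
  assumes "is_pinv Z Y"
  shows "pinv Z ** Z = Y ** Z"
proof -
  have "is_pinv Z (pinv Z)" unfolding pinv_def using assms by (rule someI)
  then show ?thesis using assms unfolding is_pinv_def by (intro pinv_proj_unique) auto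
qed

lemma sum_UNIV_plus: "(\<Sum>x\<in>(UNIV::('a::finite + 'b::finite) set). g x :: real) = (\<Sum>x\<in>UNIV. g (Inl x)) + (\<Sum>x\<in>UNIV. g (Inr x))"
  by (subst UNIV_Plus_UNIV[symmetric], subst sum.Plus) (auto simp: comp_def)

lemma vstack_mult_vec: "vstack A B *v x = vjoin (A *v x) (B *v x)"
  by (simp add: vec_eq_iff vstack_def vjoin_def matrix_vector_mult_def split: sum.split)

lemma vstack_tmult: "transpose (vstack C D) ** vstack A B = transpose C ** A + transpose D ** B"
  by (simp add: vec_eq_iff vstack_def transpose_def matrix_matrix_mult_def sum_UNIV_plus)

lemma vstack_mult_t:
  assumes "A ** transpose C = mat 1" "A ** transpose D = 0" "B ** transpose C = 0" "B ** transpose D = mat 1"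
  shows "vstack A B ** transpose (vstack C D) = mat 1"
proof -
  have e: "\<And>i j. (\<Sum>k\<in>UNIV. A$i$k * C$j$k) = (if i = j then 1 else 0)"
          "\<And>i j. (\<Sum>k\<in>UNIV. A$i$k * D$j$k) = 0"
          "\<And>i j. (\<Sum>k\<in>UNIV. B$i$k * C$j$k) = 0"
          "\<And>i j. (\<Sum>k\<in>UNIV. B$i$k * D$j$k) = (if i = j then 1 else 0)"
    using assms by (simp_all add: vec_eq_iff matrix_matrix_mult_def transpose_def mat_def)
  show ?thesis
    by (simp add: vec_eq_iff vstack_def transpose_def matrix_matrix_mult_def mat_def e split: sum.split)
qed

lemma wnorm_L:
  fixes L :: "real^'n^'n"
  assumes "invertible L"
  shows "wnorm2 (L *v g) (matrix_inv (L ** transpose L)) = norm g ^ 2"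
proof -
  let ?Li = "matrix_inv L"
  note i = inv_ok[OF assms]
  have t1: "transpose L ** transpose ?Li = mat 1" by (metis i(2) matrix_transpose_mul transpose_mat)
  have t2: "transpose ?Li ** transpose L = mat 1" by (metis i(1) matrix_transpose_mul transpose_mat)
  have "matrix_inv (L ** transpose L) = transpose ?Li ** ?Li"
  proof (rule inv_unique)
    show "L ** transpose L ** (transpose ?Li ** ?Li) = mat 1"
      by (metis i(1) t1 matrix_mul_assoc matrix_mul_rid)
    show "transpose ?Li ** ?Li ** (L ** transpose L) = mat 1"
      by (metis i(2) t2 matrix_mul_assoc matrix_mul_rid)
  qed
  moreover have "(transpose ?Li ** ?Li) *v (L *v g) = transpose ?Li *v g"
    by (metis i(2) matrix_vector_mul_assoc matrix_vector_mul_lid)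
  ultimately have "wnorm2 (L *v g) (matrix_inv (L ** transpose L)) = inner (L *v g) (transpose ?Li *v g)"
    unfolding wnorm2_def by simp
  also have "\<dots> = inner ((L *v g) v* transpose ?Li) g" by (simp only: dot_lmul_matrix)
  also have "\<dots> = inner g g" by (simp add: matrix_vector_mul_assoc i)
  finally show ?thesis by (simp add: power2_norm_eq_inner)
qed

theorem corollary1:
  fixes m p Np Nf :: nat
    and Wp :: "real^'l^'a" and Uf :: "real^'l^'b" and Yf :: "real^'l^'c"
    and L11 :: "real^'a^'a" and L21 :: "real^'a^'b" and L22 :: "real^'b^'b"
    and L31 :: "real^'a^'c" and L32 :: "real^'b^'c" and L33 :: "real^'c^'c"
    and Q1 :: "real^'l^'a" and Q2 :: "real^'l^'b" and Q3 :: "real^'l^'c"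
    and Q4 :: "real^'l^'d"
    and a :: "real^'l"
  assumes dims: "CARD('a) = Np * (m + p)" "CARD('b) = m * Nf" "CARD('c) = p * Nf"
    and full_rank: "rank (vstack Wp (vstack Uf Yf)) = CARD('a + ('b + 'c))"
    and LQ1: "Wp = L11 ** Q1"
    and LQ2: "Uf = L21 ** Q1 + L22 ** Q2"
    and LQ3: "Yf = L31 ** Q1 + L32 ** Q2 + L33 ** Q3"
    and nonsing: "invertible L11" "invertible L22" "invertible L33"
    and orth_rows:
      "Q1 ** transpose Q1 = mat 1" "Q2 ** transpose Q2 = mat 1"
      "Q3 ** transpose Q3 = mat 1" "Q4 ** transpose Q4 = mat 1"
      "Q1 ** transpose Q2 = 0" "Q1 ** transpose Q3 = 0" "Q1 ** transpose Q4 = 0"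
      "Q2 ** transpose Q1 = 0" "Q2 ** transpose Q3 = 0" "Q2 ** transpose Q4 = 0"
      "Q3 ** transpose Q1 = 0" "Q3 ** transpose Q2 = 0" "Q3 ** transpose Q4 = 0"
      "Q4 ** transpose Q1 = 0" "Q4 ** transpose Q2 = 0" "Q4 ** transpose Q3 = 0"
    and orth_cols:
      "transpose Q1 ** Q1 + transpose Q2 ** Q2 + transpose Q3 ** Q3
         + transpose Q4 ** Q4 = mat 1"
  shows
    "let xi = Wp *v a; uf = Uf *v a; yf = Yf *v a;
         Z = vstack Wp Uf;
         Rreg = matrix_inv (Uf ** (mat 1 - pinv Wp ** Wp) ** transpose Uf);
         Qreg = matrix_inv (Yf ** (mat 1 - pinv Z ** Z) ** transpose Yf);
         yspc = Yf ** pinv Z *v vjoin xi uf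
     in norm (Q1 *v a) ^ 2 = wnorm2 xi (matrix_inv (Wp ** transpose Wp))
      \<and> norm (Q2 *v a) ^ 2 = wnorm2 (uf - Uf ** pinv Wp *v xi) Rreg
      \<and> norm (Q3 *v a) ^ 2 = wnorm2 (yf - yspc) Qreg
      \<and> (\<forall>b. Q1 *v b = Q1 *v a \<and> Q2 *v b = Q2 *v a \<and> Q3 *v b = Q3 *v a
             \<longrightarrow> vstack Wp (vstack Uf Yf) *v b = vstack Wp (vstack Uf Yf) *v a)"
proof -
  let ?Li1 = "matrix_inv L11" and ?Li2 = "matrix_inv L22"
  note i1 = inv_ok[OF nonsing(1)] and i2 = inv_ok[OF nonsing(2)] and i3 = inv_ok[OF nonsing(3)]
  have r1: "\<And>A. A ** X ** Y = A" if "X ** Y = mat 1" for X Y :: "real^'l^'l"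
    using that by (metis matrix_mul_assoc matrix_mul_rid)
  have rI: "A ** X ** Y = A" if "X ** Y = mat 1" for A :: "real^'k^'j" and X :: "real^'i^'k" and Y
    using that by (metis matrix_mul_assoc matrix_mul_rid)
  have r0: "A ** X ** Y = 0" if "X ** Y = 0" for A :: "real^'k^'j" and X :: "real^'i^'k" and Y :: "real^'h^'i"
    using that by (metis matrix_mul_assoc times0_right)
  note O = orth_rows rI[OF orth_rows(1)] rI[OF orth_rows(2)] rI[OF orth_rows(3)]
    r0[OF orth_rows(5)] r0[OF orth_rows(6)] r0[OF orth_rows(8)] r0[OF orth_rows(9)]
    r0[OF orth_rows(11)] r0[OF orth_rows(12)]
    i1 i2 i3 rI[OF i1(1)] rI[OF i1(2)] rI[OF i2(1)] rI[OF i2(2)] rI[OF i3(1)] rI[OF i3(2)]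
  note S = matrix_mul_assoc matrix_add_ldistrib mm_radd mm_ldiff mm_rdiff transpose_add
    transpose_diff transpose_zero
  define Z where "Z = vstack Wp Uf"
  define R where "R = transpose Q1 ** Q1 + transpose Q2 ** Q2"
  have W1: "Wp ** (transpose Q1 ** ?Li1) = mat 1" unfolding LQ1 by (simp add: S O)
  have W2: "transpose Q1 ** ?Li1 ** Wp = transpose Q1 ** Q1" unfolding LQ1 by (simp add: S O)
  have pW: "is_pinv Wp (transpose Q1 ** ?Li1)"
    by (rule pinv_right[OF W1]) (simp add: W2 matrix_transpose_mul)
  have P1: "pinv Wp ** Wp = transpose Q1 ** Q1"
    using pinv_proj[OF pW] W2 by simp
  define C where "C = transpose Q1 ** ?Li1 - transpose Q2 ** ?Li2 ** L21 ** ?Li1"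
  define D where "D = transpose Q2 ** ?Li2"
  define X2 where "X2 = transpose (vstack (transpose C) (transpose D))"
  have ZX: "Z ** X2 = mat 1"
    unfolding Z_def X2_def
    by (rule vstack_mult_t) (simp_all add: C_def D_def LQ1 LQ2 S O)
  have XZ: "X2 ** Z = R"
    unfolding Z_def X2_def R_def vstack_tmult
    by (simp add: C_def D_def LQ1 LQ2 S O)
  have pZ: "is_pinv Z X2"
    by (rule pinv_right[OF ZX]) (simp add: XZ R_def transpose_add matrix_transpose_mul)
  have P2: "pinv Z ** Z = R" using pinv_proj[OF pZ] XZ by simp
  have A1: "Wp ** transpose Wp = L11 ** transpose L11" unfolding LQ1 matrix_transpose_mul by (simp add: S O)
  have A2: "Uf ** (mat 1 - pinv Wp ** Wp) = L22 ** Q2" unfolding P1 LQ2 by (simp add: S O)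
  have A2': "Uf ** (mat 1 - pinv Wp ** Wp) ** transpose Uf = L22 ** transpose L22"
    unfolding A2 unfolding LQ2 transpose_add matrix_transpose_mul by (simp add: S O)
  have A3: "Yf ** (mat 1 - pinv Z ** Z) = L33 ** Q3" unfolding P2 R_def LQ3 by (simp add: S O)
  have A3': "Yf ** (mat 1 - pinv Z ** Z) ** transpose Yf = L33 ** transpose L33"
    unfolding A3 unfolding LQ3 transpose_add matrix_transpose_mul by (simp add: S O)
  have xi: "Wp *v a = L11 *v (Q1 *v a)" unfolding LQ1 by (simp add: matrix_vector_mul_assoc)
  have u: "Uf *v a - Uf ** pinv Wp *v (Wp *v a) = L22 *v (Q2 *v a)"
  proof -
    have "Uf *v a - Uf ** pinv Wp *v (Wp *v a) = (Uf ** (mat 1 - pinv Wp ** Wp)) *v a"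
      by (simp add: mm_ldiff matrix_vector_mul_assoc matrix_mul_assoc matrix_vector_mult_diff_rdistrib)
    then show ?thesis unfolding A2 by (simp add: matrix_vector_mul_assoc)
  qed
  have y: "Yf *v a - Yf ** pinv Z *v vjoin (Wp *v a) (Uf *v a) = L33 *v (Q3 *v a)"
  proof -
    have "vjoin (Wp *v a) (Uf *v a) = Z *v a" unfolding Z_def vstack_mult_vec ..
    then have "Yf *v a - Yf ** pinv Z *v vjoin (Wp *v a) (Uf *v a) = (Yf ** (mat 1 - pinv Z ** Z)) *v a"
      by (simp add: mm_ldiff matrix_vector_mul_assoc matrix_mul_assoc matrix_vector_mult_diff_rdistrib)
    then show ?thesis unfolding A3 by (simp add: matrix_vector_mul_assoc)
  qed
  have last: "vstack Wp (vstack Uf Yf) *v b = vstack Wp (vstack Uf Yf) *v a"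
    if "Q1 *v b = Q1 *v a" "Q2 *v b = Q2 *v a" "Q3 *v b = Q3 *v a" for b
    using that unfolding vstack_mult_vec LQ1 LQ2 LQ3
    by (simp add: matrix_vector_mul_assoc[symmetric] matrix_vector_mult_add_rdistrib)
  have c1: "norm (Q1 *v a) ^ 2 = wnorm2 (Wp *v a) (matrix_inv (Wp ** transpose Wp))"
    unfolding A1 xi using wnorm_L[OF nonsing(1), of "Q1 *v a"] by simp
  have c2: "norm (Q2 *v a) ^ 2 = wnorm2 (Uf *v a - Uf ** pinv Wp *v (Wp *v a))
      (matrix_inv (Uf ** (mat 1 - pinv Wp ** Wp) ** transpose Uf))"
    unfolding A2' u using wnorm_L[OF nonsing(2), of "Q2 *v a"] by simp
  have c3: "norm (Q3 *v a) ^ 2 = wnorm2 (Yf *v a - Yf ** pinv Z *v vjoin (Wp *v a) (Uf *v a))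
      (matrix_inv (Yf ** (mat 1 - pinv Z ** Z) ** transpose Yf))"
    unfolding A3' y using wnorm_L[OF nonsing(3), of "Q3 *v a"] by simp
  show ?thesis
    unfolding Let_def Z_def[symmetric]
    using c1 c2 c3 last by blast
qed

end
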